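(* Assume $\|\mathbf X\|_{\mathrm{TV}}<C_{\mathbf X}$ and $\|\mathbf z\|<C_{\mathbf z}$ almost surely, and let $r>0$. Then for any $p\in\mathbb N$, the stochastic process $(Z_{p,n}(\boldsymbol\theta_p))_{\boldsymbol\theta_p\in B_{p,r}}$, $Z_{p,n}(\boldsymbol\theta_p)=\widehat{\mathcal R}_{p,n}(\boldsymbol\theta_p)-\mathcal R_p(\boldsymbol\theta_p)$, is subgaussian with respect to the semimetric $$D(\boldsymbol\theta_p,\boldsymbol\eta_p)=\frac{C}{\sqrt n}\|\boldsymbol\theta_p-\boldsymbol\eta_p\|,\qquad \boldsymbol\theta_p,\boldsymbol\eta_p\in B_{p,r},$$ where $C=2(C_{\mathbf z}+e^{C_{\mathbf X}+T})$; that is, $\mathbb E[Z_{p,n}(\boldsymbol\theta_p)]=0$ and $\mathbb E[\exp(\lambda(Z_{p,n}(\boldsymbol\theta_p)-Z_{p,n}(\boldsymbol\eta_p)))]\le\exp(\lambda^2D(\boldsymbol\theta_p,\boldsymbol\eta_p)^2/2)$ for all $\lambda\in\mathbb R$ and $\boldsymbol\theta_p,\boldsymbol\eta_p\in B_{p,r}$.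
   Context: Let $T>0$, integers $d\ge2$, $q\ge1$. $(\mathbf X,\mathbf z,y)$ is a random triple with $\mathbf X:[0,T]\to\mathbb R^{d-1}$ a continuous bounded-variation path with fixed initial value, $\mathbf z\in\mathbb R^q$, $y\in\{0,1\}$; $\|\mathbf X\|_{\mathrm{TV}}=\sup\sum_i\|\mathbf X_{t_{i+1}}-\mathbf X_{t_i}\|$ over partitions of $[0,T]$. Time augmentation $\widetilde{\mathbf X}(t)=(\mathbf X(t),t)\in\mathbb R^d$; signature terms $S^I(\widetilde{\mathbf X})=\int_{0<t_1<\dots<t_k<T}d\widetilde X^{i_1}_{t_1}\cdots d\widetilde X^{i_k}_{t_k}$ ($I\in\{1,..,d\}^k$, empty $I$ gives 1); truncated signature $S_p(\widetilde{\mathbf X})=(S^I)_{|I|\le p}\in\mathbb R^{s_d(p)}$, $s_d(p)=\sum_{k=0}^pd^k$; $\widetilde{\mathbf S}_p(\widetilde{\mathbf X},\mathbf z)=(S_p(\widetilde{\mathbf X})^\top,\mathbf z^\top)^\top$. Logistic loss $\ell(y,\eta)=-y\eta+\log(1+e^\eta)$; $\mathcal R_p(\boldsymbol\theta_p)=\mathbb E[\ell(y,\widetilde{\mathbf S}_p^\top\boldsymbol\theta_p)]$; $B_{p,r}=\{\boldsymbol\theta\in\mathbb R^{s_d(p)+q}:\|\boldsymbol\theta\|_1\le r\}$. Data $(\mathbf X_i,\mathbf z_i,y_i)_{i=1}^n$ i.i.d. copies; $\widehat{\mathcal R}_{p,n}(\boldsymbol\theta_p)=\frac1n\sum_i\ell(y_i,\widetilde{\mathbf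 S}_p(\widetilde{\mathbf X}_i,\mathbf z_i)^\top\boldsymbol\theta_p)$. $\|\cdot\|$ denotes the Euclidean norm. *)

theory Defs
  imports "HOL-Probability.Probability"
begin

definition has_rs_integral :: "(real \<Rightarrow> real) \<Rightarrow> (real \<Rightarrow> real) \<Rightarrow> real \<Rightarrow> real \<Rightarrow> real \<Rightarrow> bool" where
  "has_rs_integral f g a b L \<longleftrightarrow>
     (\<forall>\<epsilon>>0. \<exists>\<delta>>0. \<forall>(n::nat) (t::nat \<Rightarrow> real) (\<xi>::nat \<Rightarrow> real).
        t 0 = a \<and> t n = b \<and>
        (\<forall>i<n. t i \<le> \<xi> i \<and> \<xi> i \<le> t (Suc i) \<and> t (Suc i) - t i < \<delta>) \<longrightarrow>
        \<bar>(\<Sum>i<n. f (\<xi> i) * (g (t (Suc i)) - g (t i))) - L\<bar> < \<epsilon>)"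

definition rs_integral :: "(real \<Rightarrow> real) \<Rightarrow> (real \<Rightarrow> real) \<Rightarrow> real \<Rightarrow> real \<Rightarrow> real" where
  "rs_integral f g a b = (THE L. has_rs_integral f g a b L)"

definition variation_sums :: "(real \<Rightarrow> 'a::real_normed_vector) \<Rightarrow> real \<Rightarrow> real \<Rightarrow> real set" where
  "variation_sums x a b =
     {(\<Sum>i<n. norm (x (t (Suc i)) - x (t i))) | n t.
        t 0 = a \<and> t n = b \<and> (\<forall>i<n. t i \<le> t (Suc i))}"

definition bounded_variation :: "(real \<Rightarrow> 'a::real_normed_vector) \<Rightarrow> real \<Rightarrow> real \<Rightarrow> bool" where
  "bounded_variation x a b \<longleftrightarrow> bdd_above (variation_sums x a b)"

definition total_variation :: "(real \<Rightarrow> 'a::real_normed_vector) \<Rightarrow> real \<Rightarrow> real \<Rightarrow> real" where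
  "total_variation x a b = Sup (variation_sums x a b)"

text \<open>Coordinates of the time-augmented path: Some i is the i-th coordinate of X
  (d-1 = CARD('m) of them), None is the time coordinate.\<close>
definition aug :: "(real \<Rightarrow> real^'m) \<Rightarrow> real \<Rightarrow> 'm option \<Rightarrow> real" where
  "aug x t j = (case j of None \<Rightarrow> t | Some i \<Rightarrow> x t $ i)"

text \<open>sig_rev x (rev I) t = S^I of the augmented path restricted to [0,t].\<close>
fun sig_rev :: "(real \<Rightarrow> real^'m) \<Rightarrow> 'm option list \<Rightarrow> real \<Rightarrow> real" where
  "sig_rev x [] t = 1"
| "sig_rev x (j # rw) t = rs_integral (sig_rev x rw) (\<lambda>s. aug x s j) 0 t"

definition signature :: "real \<Rightarrow> (real \<Rightarrow> real^'m) \<Rightarrow> 'm option list \<Rightarrow> real" where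
  "signature T x I = sig_rev x (rev I) T"

text \<open>Words of length at most p, indexing the truncated signature (s_d(p) of them).\<close>
definition words :: "nat \<Rightarrow> 'm option list set" where
  "words p = {w. length w \<le> p}"

text \<open>A parameter theta_p in R^(s_d(p)+q) is a pair (a, b): a gives the coefficients of the
  signature terms (indexed by words of length <= p, zero elsewhere), b those of z.\<close>
definition lin_pred :: "nat \<Rightarrow> real \<Rightarrow> (real \<Rightarrow> real^'m) \<Rightarrow> real^'q
    \<Rightarrow> ('m option list \<Rightarrow> real) \<times> (real^'q) \<Rightarrow> real" where
  "lin_pred p T x z \<theta> = (\<Sum>w\<in>words p. signature T x w * fst \<theta> w) + z \<bullet> snd \<theta>"

definition logistic_loss :: "bool \<Rightarrow> real \<Rightarrow> real" where
  "logistic_loss y \<eta> = - (of_bool y) * \<eta> + ln (1 + exp \<eta>)"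

definition l1_norm_par :: "nat \<Rightarrow> ('m option list \<Rightarrow> real) \<times> (real^'q) \<Rightarrow> real" where
  "l1_norm_par p \<theta> = (\<Sum>w\<in>words p. \<bar>fst \<theta> w\<bar>) + (\<Sum>j\<in>UNIV. \<bar>snd \<theta> $ j\<bar>)"

definition eucl_norm_par :: "nat \<Rightarrow> ('m option list \<Rightarrow> real) \<times> (real^'q) \<Rightarrow> real" where
  "eucl_norm_par p \<theta> = sqrt ((\<Sum>w\<in>words p. (fst \<theta> w)\<^sup>2) + (norm (snd \<theta>))\<^sup>2)"

definition ball_par :: "nat \<Rightarrow> real \<Rightarrow> (('m option list \<Rightarrow> real) \<times> (real^'q)) set" where
  "ball_par p r = {\<theta>. (\<forall>w. p < length w \<longrightarrow> fst \<theta> w = 0) \<and> l1_norm_par p \<theta> \<le> r}"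

definition obs :: "real \<Rightarrow> (real \<Rightarrow> real^'m) \<Rightarrow> real^'q \<Rightarrow> bool
    \<Rightarrow> ('m option list \<Rightarrow> real) \<times> (real^'q) \<times> bool" where
  "obs T x z y = (signature T x, z, y)"

definition obs_space :: "(('m option list \<Rightarrow> real) \<times> (real^'q) \<times> bool) measure" where
  "obs_space = (PiM UNIV (\<lambda>_. borel)) \<Otimes>\<^sub>M (borel \<Otimes>\<^sub>M count_space UNIV)"

end

theory Submission
  imports Defs
begin

definition tpart :: "real \<Rightarrow> real \<Rightarrow> nat \<Rightarrow> (nat \<Rightarrow> real) \<Rightarrow> (nat \<Rightarrow> real) \<Rightarrow> real \<Rightarrow> bool" where
  "tpart a b n t \<xi> \<delta> \<longleftrightarrow> t 0 = a \<and> t n = b \<and> (\<forall>i<n. t i \<le> \<xi> i \<and> \<xi> i \<le> t (Suc i) \<and> t (Suc i) - t i < \<delta>)"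

definition rsum :: "(real \<Rightarrow> real) \<Rightarrow> (real \<Rightarrow> real) \<Rightarrow> nat \<Rightarrow> (nat \<Rightarrow> real) \<Rightarrow> (nat \<Rightarrow> real) \<Rightarrow> real" where
  "rsum f g n t \<xi> = (\<Sum>i<n. f (\<xi> i) * (g (t (Suc i)) - g (t i)))"

lemma has_rs_integral_alt:
  "has_rs_integral f g a b L \<longleftrightarrow> (\<forall>\<epsilon>>0. \<exists>\<delta>>0. \<forall>n t \<xi>. tpart a b n t \<xi> \<delta> \<longrightarrow> \<bar>rsum f g n t \<xi> - L\<bar> < \<epsilon>)"
  by (simp add: has_rs_integral_def tpart_def rsum_def)

lemma chain_mono:
  assumes "\<forall>i<n. t i \<le> t (Suc i)" "i \<le> j" "j \<le> n"
  shows "t i \<le> (t j :: real)"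
  using assms(2,3)
proof (induction j)
  case 0 then show ?case by simp
next
  case (Suc j)
  show ?case
  proof (cases "i = Suc j")
    case False
    then have "t i \<le> t j" using Suc by simp
    also have "t j \<le> t (Suc j)" using assms(1) Suc by simp
    finally show ?thesis .
  qed simp
qed

lemma tpart_range:
  assumes "tpart a b n t \<xi> \<delta>" "i \<le> n"
  shows "a \<le> t i" "t i \<le> b"
proof -
  have m: "\<forall>i<n. t i \<le> t (Suc i)" using assms(1) unfolding tpart_def by force
  show "a \<le> t i" using chain_mono[OF m, of 0 i] assms unfolding tpart_def by auto
  show "t i \<le> b" using chain_mono[OF m, of i n] assms unfolding tpart_def by auto
qed

definition clamp :: "real \<Rightarrow> real \<Rightarrow> real \<Rightarrow> real" where
  "clamp lo hi x = min (max x lo) hi"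

lemma clamp_swap:
  fixes g :: "real \<Rightarrow> real"
  assumes "lo \<le> hi" "lo' \<le> hi'"
  shows "g (clamp lo hi hi') - g (clamp lo hi lo') = g (clamp lo' hi' hi) - g (clamp lo' hi' lo)"
proof (cases "hi' \<le> lo")
  case True
  then have "clamp lo hi hi' = lo" "clamp lo hi lo' = lo" "clamp lo' hi' hi = hi'" "clamp lo' hi' lo = hi'"
    using assms by (auto simp: clamp_def)
  then show ?thesis by simp
next
  case F1: False
  show ?thesis
  proof (cases "hi \<le> lo'")
    case True
    then have "clamp lo hi hi' = hi" "clamp lo hi lo' = hi" "clamp lo' hi' hi = lo'" "clamp lo' hi' lo = lo'"
      using assms by (auto simp: clamp_def)
    then show ?thesis by simp
  next
    case False
    then have "clamp lo hi hi' = min hi hi'" "clamp lo hi lo' = max lo lo'" "clamp lo' hi' hi = min hi hi'" "clamp lo' hi' lo = max lo lo'"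
      using assms F1 by (auto simp: clamp_def min_def max_def)
    then show ?thesis by simp
  qed
qed

lemma rsum_compare:
  assumes P: "tpart a b n t \<xi> \<delta>" and Q: "tpart a b m u \<eta> \<delta>"
    and dom: "\<forall>x y. a \<le> x \<longrightarrow> x \<le> y \<longrightarrow> y \<le> b \<longrightarrow> \<bar>g y - g x\<bar> \<le> v y - v x"
    and osc: "\<forall>x\<in>{a..b}. \<forall>y\<in>{a..b}. \<bar>x - y\<bar> < 2*\<delta> \<longrightarrow> \<bar>f x - f y\<bar> \<le> \<omega>"
    and om: "\<omega> \<ge> 0"
  shows "\<bar>rsum f g n t \<xi> - rsum f g m u \<eta>\<bar> \<le> \<omega> * (v b - v a)"
proof -
  define A where "A i k = g (clamp (t i) (t (Suc i)) (u (Suc k))) - g (clamp (t i) (t (Suc i)) (u k))" for i k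
  define Vd where "Vd i k = v (clamp (t i) (t (Suc i)) (u (Suc k))) - v (clamp (t i) (t (Suc i)) (u k))" for i k
  have t0: "t 0 = a" "t n = b" and u0: "u 0 = a" "u m = b" using P Q unfolding tpart_def by auto
  have tr: "a \<le> t i" "t i \<le> b" if "i \<le> n" for i using tpart_range[OF P that] by auto
  have ur: "a \<le> u i" "u i \<le> b" if "i \<le> m" for i using tpart_range[OF Q that] by auto
  have tm: "t i \<le> \<xi> i" "\<xi> i \<le> t (Suc i)" "t (Suc i) - t i < \<delta>" if "i < n" for i
    using P that unfolding tpart_def by auto
  have um: "u i \<le> \<eta> i" "\<eta> i \<le> u (Suc i)" "u (Suc i) - u i < \<delta>" if "i < m" for i
    using Q that unfolding tpart_def by auto
  have S1: "rsum f g n t \<xi> = (\<Sum>i<n. \<Sum>k<m. f (\<xi> i) * A i k)"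
    unfolding rsum_def
  proof (rule sum.cong[OF refl])
    fix i assume i: "i \<in> {..<n}"
    have "(\<Sum>k<m. A i k) = g (clamp (t i) (t (Suc i)) (u m)) - g (clamp (t i) (t (Suc i)) (u 0))"
      unfolding A_def by (rule sum_lessThan_telescope)
    also have "\<dots> = g (t (Suc i)) - g (t i)"
      using u0 tr[of i] tr[of "Suc i"] tm[of i] i by (simp add: clamp_def)
    finally show "f (\<xi> i) * (g (t (Suc i)) - g (t i)) = (\<Sum>k<m. f (\<xi> i) * A i k)"
      by (simp add: sum_distrib_left[symmetric])
  qed
  have S2: "rsum f g m u \<eta> = (\<Sum>i<n. \<Sum>k<m. f (\<eta> k) * A i k)"
    unfolding rsum_def
  proof (subst sum.swap, rule sum.cong[OF refl])
    fix k assume k: "k \<in> {..<m}"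
    have "(\<Sum>i<n. g (clamp (u k) (u (Suc k)) (t (Suc i))) - g (clamp (u k) (u (Suc k)) (t i)))
        = g (clamp (u k) (u (Suc k)) (t n)) - g (clamp (u k) (u (Suc k)) (t 0))"
      by (rule sum_lessThan_telescope)
    also have "\<dots> = g (u (Suc k)) - g (u k)"
      using t0 ur[of k] ur[of "Suc k"] um[of k] k by (simp add: clamp_def)
    moreover have "A i k = g (clamp (u k) (u (Suc k)) (t (Suc i))) - g (clamp (u k) (u (Suc k)) (t i))"
      if "i < n" for i
      unfolding A_def by (rule clamp_swap) (use um[of k] k tm[of i] that in auto)
    ultimately have e: "g (u (Suc k)) - g (u k) = (\<Sum>i<n. A i k)"
      by simp
    show "f (\<eta> k) * (g (u (Suc k)) - g (u k)) = (\<Sum>i<n. f (\<eta> k) * A i k)"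
      by (simp add: e sum_distrib_left)
  qed
  have bound: "\<bar>(f (\<xi> i) - f (\<eta> k)) * A i k\<bar> \<le> \<omega> * Vd i k" if i: "i < n" and k: "k < m" for i k
  proof -
    define c1 where "c1 = clamp (t i) (t (Suc i)) (u k)"
    define c2 where "c2 = clamp (t i) (t (Suc i)) (u (Suc k))"
    have o: "t i \<le> t (Suc i)" "u k \<le> u (Suc k)" using tm[OF i] um[OF k] by auto
    have c: "a \<le> c1" "c1 \<le> c2" "c2 \<le> b"
      using o tr[of i] tr[of "Suc i"] i unfolding c1_def c2_def clamp_def by auto
    have Ab: "\<bar>A i k\<bar> \<le> Vd i k" using dom c unfolding A_def Vd_def c1_def[symmetric] c2_def[symmetric] by auto
    show ?thesis
    proof (cases "c1 = c2")
      case True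
      then show ?thesis using Ab om unfolding A_def c1_def c2_def by simp
    next
      case False
      have "u k < t (Suc i)" "t i < u (Suc k)"
        using False o unfolding c1_def c2_def clamp_def by (auto simp: min_def max_def split: if_splits)
      then have "\<bar>\<xi> i - \<eta> k\<bar> < 2 * \<delta>" using tm[OF i] um[OF k] by auto
      moreover have "\<xi> i \<in> {a..b}" "\<eta> k \<in> {a..b}"
        using tm[OF i] um[OF k] tr[of i] tr[of "Suc i"] ur[of k] ur[of "Suc k"] i k by auto
      ultimately have "\<bar>f (\<xi> i) - f (\<eta> k)\<bar> \<le> \<omega>" using osc by blast
      then show ?thesis using Ab om
        by (simp add: abs_mult mult_mono)
    qed
  qed
  have "\<bar>rsum f g n t \<xi> - rsum f g m u \<eta>\<bar> = \<bar>\<Sum>i<n. \<Sum>k<m. (f (\<xi> i) - f (\<eta> k)) * A i k\<bar>"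
    unfolding S1 S2 by (simp add: sum_subtractf left_diff_distrib)
  also have "\<dots> \<le> (\<Sum>i<n. \<Sum>k<m. \<omega> * Vd i k)"
    by (rule order_trans[OF sum_abs], rule sum_mono, rule order_trans[OF sum_abs], rule sum_mono)
       (use bound in auto)
  also have "\<dots> = \<omega> * (\<Sum>i<n. v (t (Suc i)) - v (t i))"
  proof -
    have "(\<Sum>k<m. Vd i k) = v (t (Suc i)) - v (t i)" if i: "i < n" for i
    proof -
      have "(\<Sum>k<m. Vd i k) = v (clamp (t i) (t (Suc i)) (u m)) - v (clamp (t i) (t (Suc i)) (u 0))"
        unfolding Vd_def by (rule sum_lessThan_telescope)
      also have "\<dots> = v (t (Suc i)) - v (t i)"
        using u0 tr[of i] tr[of "Suc i"] tm[of i] i by (simp add: clamp_def)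
      finally show ?thesis .
    qed
    then show ?thesis by (simp add: sum_distrib_left[symmetric])
  qed
  also have "\<dots> = \<omega> * (v b - v a)"
    by (subst sum_lessThan_telescope) (simp add: t0)
  finally show ?thesis .
qed


definition unif :: "real \<Rightarrow> real \<Rightarrow> nat \<Rightarrow> nat \<Rightarrow> real" where
  "unif a b N i = a + (b - a) * real i / real (Suc N)"

lemma tpart_unif:
  assumes "a \<le> b" "(b - a) / real (Suc N) < \<delta>"
  shows "tpart a b (Suc N) (unif a b N) (unif a b N) \<delta>"
proof -
  have "unif a b N (Suc i) - unif a b N i = (b - a) / real (Suc N)" for i
  proof -
    have "unif a b N (Suc i) - unif a b N i = ((b - a) * real (Suc i) - (b - a) * real i) / real (Suc N)"
      unfolding unif_def by (simp add: diff_divide_distrib)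
    also have "(b - a) * real (Suc i) - (b - a) * real i = b - a" by (simp add: algebra_simps)
    finally show ?thesis .
  qed
  moreover have "(b - a) / real (Suc N) \<ge> 0" using assms by simp
  ultimately have "unif a b N i \<le> unif a b N (Suc i)" for i by (metis diff_ge_0_iff_ge)
  moreover have "unif a b N 0 = a" "unif a b N (Suc N) = b" by (auto simp: unif_def)
  ultimately show ?thesis using assms \<open>\<And>i. unif a b N (Suc i) - unif a b N i = (b - a) / real (Suc N)\<close>
    unfolding tpart_def by auto
qed

lemma tpart_mono: "tpart a b n t \<xi> \<delta> \<Longrightarrow> \<delta> \<le> \<delta>' \<Longrightarrow> tpart a b n t \<xi> \<delta>'"
  unfolding tpart_def by force

lemma mesh_small:
  assumes "\<delta> > 0" "c \<ge> 0"
  shows "\<exists>M. \<forall>N\<ge>M. c / real (Suc N) < \<delta>"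
proof -
  obtain M :: nat where M: "c / \<delta> < real M" using reals_Archimedean2 by blast
  have "c / real (Suc N) < \<delta>" if "N \<ge> M" for N
  proof -
    have "c < \<delta> * real M" using M assms by (simp add: field_simps)
    also have "\<dots> \<le> \<delta> * real (Suc N)" using that assms by simp
    finally show ?thesis by (simp add: field_simps)
  qed
  then show ?thesis by blast
qed

definition dom_by :: "(real \<Rightarrow> real) \<Rightarrow> (real \<Rightarrow> real) \<Rightarrow> real \<Rightarrow> real \<Rightarrow> bool" where
  "dom_by g v a b \<longleftrightarrow> (\<forall>x y. a \<le> x \<longrightarrow> x \<le> y \<longrightarrow> y \<le> b \<longrightarrow> \<bar>g y - g x\<bar> \<le> v y - v x)"

lemma rs_cauchy:
  assumes f: "continuous_on {a..b} f" and d: "dom_by g v a b" and ab: "a \<le> b" and e: "\<epsilon> > 0"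
  shows "\<exists>\<delta>>0. \<forall>n t \<xi> m u \<eta>. tpart a b n t \<xi> \<delta> \<longrightarrow> tpart a b m u \<eta> \<delta> \<longrightarrow>
            \<bar>rsum f g n t \<xi> - rsum f g m u \<eta>\<bar> < \<epsilon>"
proof -
  define V where "V = v b - v a"
  have V0: "V \<ge> 0" using d ab unfolding dom_by_def V_def by (metis abs_ge_zero order.trans order_refl)
  define \<omega> where "\<omega> = \<epsilon> / (V + 1)"
  have om: "\<omega> > 0" using e V0 by (simp add: \<omega>_def)
  have "uniformly_continuous_on {a..b} f" using f by (intro compact_uniformly_continuous) auto
  then obtain dd where dd: "dd > 0" "\<forall>x\<in>{a..b}. \<forall>x'\<in>{a..b}. dist x' x < dd \<longrightarrow> dist (f x') (f x) < \<omega>"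
    unfolding uniformly_continuous_on_def using om by meson
  have osc: "\<forall>x\<in>{a..b}. \<forall>y\<in>{a..b}. \<bar>x - y\<bar> < 2*(dd/2) \<longrightarrow> \<bar>f x - f y\<bar> \<le> \<omega>"
    using dd(2) by (auto simp: dist_real_def intro: less_imp_le)
  have "\<omega> * V < \<epsilon>"
  proof -
    have "\<omega> * V \<le> \<omega> * (V + 1) - \<omega>" by (simp add: algebra_simps)
    also have "\<dots> < \<epsilon>" using om V0 by (simp add: \<omega>_def)
    finally show ?thesis .
  qed
  moreover have "\<bar>rsum f g n t \<xi> - rsum f g m u \<eta>\<bar> \<le> \<omega> * V"
    if "tpart a b n t \<xi> (dd/2)" "tpart a b m u \<eta> (dd/2)" for n t \<xi> m u \<eta>
    unfolding V_def by (rule rsum_compare[OF that _ osc]) (use d om in \<open>auto simp: dom_by_def\<close>)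
  ultimately show ?thesis using dd(1) by (intro exI[of _ "dd/2"]) force
qed

lemma rs_exists:
  assumes f: "continuous_on {a..b} f" and d: "dom_by g v a b" and ab: "a \<le> b"
  shows "\<exists>L. has_rs_integral f g a b L"
proof -
  define s where "s N = rsum f g (Suc N) (unif a b N) (unif a b N)" for N
  have "Cauchy s"
  proof (rule metric_CauchyI)
    fix e :: real assume e: "e > 0"
    obtain \<delta> where \<delta>: "\<delta> > 0" "\<forall>n t \<xi> m u \<eta>. tpart a b n t \<xi> \<delta> \<longrightarrow> tpart a b m u \<eta> \<delta> \<longrightarrow>
            \<bar>rsum f g n t \<xi> - rsum f g m u \<eta>\<bar> < e"
      using rs_cauchy[OF f d ab e] by blast
    obtain M where M: "\<forall>N\<ge>M. (b - a) / real (Suc N) < \<delta>" using mesh_small[OF \<delta>(1), of "b - a"] ab by auto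
    show "\<exists>M. \<forall>m\<ge>M. \<forall>n\<ge>M. dist (s m) (s n) < e"
      using \<delta>(2) M tpart_unif[OF ab] unfolding s_def dist_real_def by blast
  qed
  then obtain L where L: "s \<longlonglongrightarrow> L" using Cauchy_convergent_iff convergent_def by blast
  have "has_rs_integral f g a b L"
    unfolding has_rs_integral_alt
  proof (intro allI impI)
    fix \<epsilon> :: real assume e: "\<epsilon> > 0"
    obtain \<delta> where \<delta>: "\<delta> > 0" "\<forall>n t \<xi> m u \<eta>. tpart a b n t \<xi> \<delta> \<longrightarrow> tpart a b m u \<eta> \<delta> \<longrightarrow>
            \<bar>rsum f g n t \<xi> - rsum f g m u \<eta>\<bar> < \<epsilon>/2"
      using rs_cauchy[OF f d ab, of "\<epsilon>/2"] e by auto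
    obtain M where M: "\<forall>N\<ge>M. (b - a) / real (Suc N) < \<delta>" using mesh_small[OF \<delta>(1), of "b - a"] ab by auto
    obtain N0 where N0: "\<forall>N\<ge>N0. dist (s N) L < \<epsilon>/2" using L e unfolding lim_sequentially
      by (meson half_gt_zero)
    define N where "N = max M N0"
    have "tpart a b (Suc N) (unif a b N) (unif a b N) \<delta>" using M tpart_unif[OF ab] by (simp add: N_def)
    then have "\<bar>rsum f g n t \<xi> - s N\<bar> < \<epsilon>/2" if "tpart a b n t \<xi> \<delta>" for n t \<xi>
      using \<delta>(2) that unfolding s_def by blast
    moreover have "\<bar>s N - L\<bar> < \<epsilon>/2" using N0 by (simp add: N_def dist_real_def)
    ultimately have "\<bar>rsum f g n t \<xi> - L\<bar> < \<epsilon>" if "tpart a b n t \<xi> \<delta>" for n t \<xi>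
    proof -
      assume h1: "\<And>n t \<xi>. tpart a b n t \<xi> \<delta> \<Longrightarrow> \<bar>rsum f g n t \<xi> - s N\<bar> < \<epsilon>/2"
        and h2: "\<bar>s N - L\<bar> < \<epsilon>/2"
      have "\<bar>rsum f g n t \<xi> - s N\<bar> < \<epsilon>/2" using h1 that by blast
      with h2 show ?thesis by linarith
    qed
    then show "\<exists>\<delta>>0. \<forall>n t \<xi>. tpart a b n t \<xi> \<delta> \<longrightarrow> \<bar>rsum f g n t \<xi> - L\<bar> < \<epsilon>"
      using \<delta>(1) by blast
  qed
  then show ?thesis by blast
qed

lemma rs_tendsto:
  assumes L: "has_rs_integral f g a b L" and c: "c \<ge> 0"
    and P: "\<And>N \<delta>. c / real (Suc N) < \<delta> \<Longrightarrow> tpart a b (n N) (t N) (\<xi> N) \<delta>"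
  shows "(\<lambda>N. rsum f g (n N) (t N) (\<xi> N)) \<longlonglongrightarrow> L"
  unfolding lim_sequentially dist_real_def
proof (intro allI impI)
  fix r :: real assume r: "r > 0"
  obtain \<delta> where \<delta>: "\<delta> > 0" "\<forall>n t \<xi>. tpart a b n t \<xi> \<delta> \<longrightarrow> \<bar>rsum f g n t \<xi> - L\<bar> < r"
    using L r unfolding has_rs_integral_alt by blast
  obtain M where M: "\<forall>N\<ge>M. c / real (Suc N) < \<delta>" using mesh_small[OF \<delta>(1) c] by auto
  show "\<exists>no. \<forall>N\<ge>no. \<bar>rsum f g (n N) (t N) (\<xi> N) - L\<bar> < r"
    using M P \<delta>(2) by blast
qed

lemma rs_unif_tendsto:
  assumes L: "has_rs_integral f g a b L" and ab: "a \<le> b"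
  shows "(\<lambda>N. rsum f g (Suc N) (unif a b N) (unif a b N)) \<longlonglongrightarrow> L"
  by (rule rs_tendsto[OF L, of "b - a"]) (use ab tpart_unif in auto)

lemma rs_integral_eq:
  assumes L: "has_rs_integral f g a b L" and ab: "a \<le> b"
  shows "rs_integral f g a b = L"
  unfolding rs_integral_def
proof (rule the_equality[of "has_rs_integral f g a b" L, OF L])
  fix L' assume "has_rs_integral f g a b L'"
  from LIMSEQ_unique[OF rs_unif_tendsto[OF this ab] rs_unif_tendsto[OF L ab]] show "L' = L" .
qed

lemma rs_integral_has:
  assumes f: "continuous_on {a..b} f" and d: "dom_by g v a b" and ab: "a \<le> b"
  shows "has_rs_integral f g a b (rs_integral f g a b)"
  using rs_exists[OF assms] rs_integral_eq[OF _ ab] by metis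


lemma sum_lessThan_add_split:
  "(\<Sum>i<m + k. h i) = (\<Sum>i<m. h i) + (\<Sum>i<k. h (m + i))" for h :: "nat \<Rightarrow> real"
  by (induction k) auto

lemma dom_by_mono: "dom_by g v a b \<Longrightarrow> a \<le> a' \<Longrightarrow> b' \<le> b \<Longrightarrow> dom_by g v a' b'"
  unfolding dom_by_def by force

lemma rs_piece_bound:
  assumes P: "tpart s u n t \<xi> \<delta>" and d: "dom_by g v s u"
    and osc: "\<forall>x\<in>{s..u}. \<bar>f x - f s\<bar> \<le> \<omega>"
  shows "\<bar>rsum f g n t \<xi>\<bar> \<le> \<bar>f s\<bar> * \<bar>g u - g s\<bar> + \<omega> * (v u - v s)"
proof -
  have t0: "t 0 = s" "t n = u" using P unfolding tpart_def by auto
  have tr: "s \<le> t i" "t i \<le> u" if "i \<le> n" for i using tpart_range[OF P that] by auto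
  have tm: "t i \<le> \<xi> i" "\<xi> i \<le> t (Suc i)" if "i < n" for i
    using P that unfolding tpart_def by auto
  have "rsum f g n t \<xi> = (\<Sum>i<n. f s * (g (t (Suc i)) - g (t i))) + (\<Sum>i<n. (f (\<xi> i) - f s) * (g (t (Suc i)) - g (t i)))"
    unfolding rsum_def by (simp add: sum.distrib[symmetric] algebra_simps)
  also have "(\<Sum>i<n. f s * (g (t (Suc i)) - g (t i))) = f s * (g u - g s)"
    by (simp add: sum_distrib_left[symmetric] t0 sum_lessThan_telescope[of "\<lambda>i. g (t i)"])
  finally have e: "rsum f g n t \<xi> = f s * (g u - g s) + (\<Sum>i<n. (f (\<xi> i) - f s) * (g (t (Suc i)) - g (t i)))" .
  have "\<bar>\<Sum>i<n. (f (\<xi> i) - f s) * (g (t (Suc i)) - g (t i))\<bar> \<le> (\<Sum>i<n. \<omega> * (v (t (Suc i)) - v (t i)))"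
  proof (rule order_trans[OF sum_abs], rule sum_mono)
    fix i assume i: "i \<in> {..<n}"
    have x: "\<xi> i \<in> {s..u}" using tm[of i] tr[of i] tr[of "Suc i"] i by auto
    have "\<bar>g (t (Suc i)) - g (t i)\<bar> \<le> v (t (Suc i)) - v (t i)"
      using d tm[of i] tr[of i] tr[of "Suc i"] i unfolding dom_by_def by auto
    then show "\<bar>(f (\<xi> i) - f s) * (g (t (Suc i)) - g (t i))\<bar> \<le> \<omega> * (v (t (Suc i)) - v (t i))"
      unfolding abs_mult using osc x by (intro mult_mono) auto
  qed
  also have "\<dots> = \<omega> * (v u - v s)" by (simp add: sum_distrib_left[symmetric] t0 sum_lessThan_telescope[of "\<lambda>i. v (t i)"])
  finally have X: "\<bar>\<Sum>i<n. (f (\<xi> i) - f s) * (g (t (Suc i)) - g (t i))\<bar> \<le> \<omega> * (v u - v s)" .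
  show ?thesis unfolding e
    using abs_triangle_ineq[of "f s * (g u - g s)" "\<Sum>i<n. (f (\<xi> i) - f s) * (g (t (Suc i)) - g (t i))"] X
    by (simp add: abs_mult)
qed

lemma rs_diff_bound:
  assumes f: "continuous_on {a..T} f" and d: "dom_by g v a T"
    and su: "a \<le> s" "s \<le> u" "u \<le> T"
    and osc: "\<forall>x\<in>{s..u}. \<bar>f x - f s\<bar> \<le> \<omega>"
  shows "\<bar>rs_integral f g a u - rs_integral f g a s\<bar> \<le> \<bar>f s\<bar> * \<bar>g u - g s\<bar> + \<omega> * (v u - v s)"
proof -
  define m where "m N = Suc N" for N
  define tt where "tt N i = (if i \<le> Suc N then unif a s N i else unif s u N (i - Suc N))" for N i
  have fu: "continuous_on {a..u} f" and fs: "continuous_on {a..s} f"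
    using f su by (auto intro: continuous_on_subset)
  have du: "dom_by g v a u" and ds: "dom_by g v a s" and dsu: "dom_by g v s u"
    using d su by (auto intro: dom_by_mono)
  have Hu: "has_rs_integral f g a u (rs_integral f g a u)" by (rule rs_integral_has[OF fu du]) (use su in auto)
  have Hs: "has_rs_integral f g a s (rs_integral f g a s)" by (rule rs_integral_has[OF fs ds]) (use su in auto)
  have tt1: "tt N i = unif a s N i" if "i \<le> Suc N" for N i using that by (simp add: tt_def)
  have tt2: "tt N (Suc N + j) = unif s u N j" for N j
    by (cases j) (auto simp: tt_def unif_def)
  have split: "rsum f g (Suc N + Suc N) (tt N) (tt N) =
      rsum f g (Suc N) (unif a s N) (unif a s N) + rsum f g (Suc N) (unif s u N) (unif s u N)" for N
    unfolding rsum_def sum_lessThan_add_split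
    using tt1 tt2[of N] by (simp add: tt2[of N "Suc _", simplified])
  have tp: "tpart a u (Suc N + Suc N) (tt N) (tt N) \<delta>" if "(u - a) / real (Suc N) < \<delta>" for N \<delta>
  proof -
    have "(s - a) / real (Suc N) \<le> (u - a) / real (Suc N)" "(u - s) / real (Suc N) \<le> (u - a) / real (Suc N)"
      by (rule divide_right_mono, use su in auto)+
    then have le1: "(s - a) / real (Suc N) < \<delta>" "(u - s) / real (Suc N) < \<delta>"
      using that by auto
    have P1: "tpart a s (Suc N) (unif a s N) (unif a s N) \<delta>" by (rule tpart_unif) (use su le1 in auto)
    have P2: "tpart s u (Suc N) (unif s u N) (unif s u N) \<delta>" by (rule tpart_unif) (use su le1 in auto)
    show ?thesis unfolding tpart_def
    proof (intro conjI allI impI)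
      show "tt N 0 = a" by (simp add: tt_def unif_def)
      show "tt N (Suc N + Suc N) = u" using tt2[of N "Suc N"] by (simp add: unif_def)
      fix i assume i: "i < Suc N + Suc N"
      have "tt N i \<le> tt N i \<and> tt N i \<le> tt N (Suc i) \<and> tt N (Suc i) - tt N i < \<delta>"
      proof (cases "i < Suc N")
        case True
        then show ?thesis using P1 tt1[of i N] tt1[of "Suc i" N] unfolding tpart_def by auto
      next
        case False
        then obtain j where j: "i = Suc N + j" "j < Suc N" using i by (metis add_less_imp_less_left le_Suc_ex not_less)
        then show ?thesis using P2 tt2[of N j] tt2[of N "Suc j"] unfolding tpart_def by auto
      qed
      then show "tt N i \<le> tt N i" "tt N i \<le> tt N (Suc i)" "tt N (Suc i) - tt N i < \<delta>" by auto
    qed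
  qed
  have L2: "(\<lambda>N. rsum f g (Suc N + Suc N) (tt N) (tt N)) \<longlonglongrightarrow> rs_integral f g a u"
    by (rule rs_tendsto[OF Hu, of "u - a"]) (use su tp in auto)
  have L1: "(\<lambda>N. rsum f g (Suc N) (unif a s N) (unif a s N)) \<longlonglongrightarrow> rs_integral f g a s"
    by (rule rs_unif_tendsto[OF Hs]) (use su in auto)
  have "(\<lambda>N. rsum f g (Suc N) (unif s u N) (unif s u N)) \<longlonglongrightarrow> rs_integral f g a u - rs_integral f g a s"
    using tendsto_diff[OF L2 L1] unfolding split by simp
  then have "(\<lambda>N. \<bar>rsum f g (Suc N) (unif s u N) (unif s u N)\<bar>) \<longlonglongrightarrow> \<bar>rs_integral f g a u - rs_integral f g a s\<bar>"
    by (rule tendsto_rabs)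
  moreover have "\<bar>rsum f g (Suc N) (unif s u N) (unif s u N)\<bar> \<le> \<bar>f s\<bar> * \<bar>g u - g s\<bar> + \<omega> * (v u - v s)" for N
    by (rule rs_piece_bound[OF tpart_unif[of s u N "(u - s) / real (Suc N) + 1"] dsu osc]) (use su in auto)
  ultimately show ?thesis by (intro LIMSEQ_le_const2) auto
qed


lemma dom_by_mono_v: "dom_by g v a b \<Longrightarrow> a \<le> x \<Longrightarrow> x \<le> y \<Longrightarrow> y \<le> b \<Longrightarrow> v x \<le> v y"
proof -
  assume "dom_by g v a b" "a \<le> x" "x \<le> y" "y \<le> b"
  then have "\<bar>g y - g x\<bar> \<le> v y - v x" unfolding dom_by_def by blast
  then show "v x \<le> v y" by linarith
qed

lemma rs_cont:
  assumes f: "continuous_on {a..T} f" and g: "continuous_on {a..T} g" and d: "dom_by g v a T"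
  shows "continuous_on {a..T} (\<lambda>t. rs_integral f g a t)"
  unfolding continuous_on_iff
proof (intro ballI allI impI)
  fix t e :: real assume t: "t \<in> {a..T}" and e: "e > 0"
  obtain B where B: "\<forall>x\<in>{a..T}. \<bar>f x\<bar> \<le> B"
    using compact_imp_bounded[OF compact_continuous_image[OF f compact_Icc]] unfolding bounded_iff
    by auto
  then have B0: "B \<ge> 0" using t by force
  define V where "V = v T - v a"
  have V0: "V \<ge> 0" using dom_by_mono_v[OF d, of a T] t by (auto simp: V_def)
  define \<omega> where "\<omega> = e / (2 * (V + 1))"
  have om: "\<omega> > 0" using e V0 by (simp add: \<omega>_def)
  have "uniformly_continuous_on {a..T} f" using f by (intro compact_uniformly_continuous) auto
  then obtain d2 where d2: "d2 > 0" "\<forall>x\<in>{a..T}. \<forall>x'\<in>{a..T}. dist x' x < d2 \<longrightarrow> dist (f x') (f x) < \<omega>"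
    unfolding uniformly_continuous_on_def using om by meson
  have eB: "e / (2 * (B + 1)) > 0" using e B0 by simp
  obtain d1 where d1: "d1 > 0" "\<forall>x'\<in>{a..T}. dist x' t < d1 \<longrightarrow> dist (g x') (g t) < e / (2 * (B + 1))"
    using g t eB unfolding continuous_on_iff by meson
  show "\<exists>d>0. \<forall>x'\<in>{a..T}. dist x' t < d \<longrightarrow> dist (rs_integral f g a x') (rs_integral f g a t) < e"
  proof (intro exI[of _ "min d1 d2"] conjI ballI impI)
    show "min d1 d2 > 0" using d1 d2 by simp
    fix t' assume t': "t' \<in> {a..T}" and dt: "dist t' t < min d1 d2"
    define s where "s = min t t'"
    define u where "u = max t t'"
    have su: "a \<le> s" "s \<le> u" "u \<le> T" using t t' by (auto simp: s_def u_def)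
    have osc: "\<forall>x\<in>{s..u}. \<bar>f x - f s\<bar> \<le> \<omega>"
    proof
      fix x assume x: "x \<in> {s..u}"
      have "dist x s < d2" using x dt by (auto simp: s_def u_def dist_real_def)
      then show "\<bar>f x - f s\<bar> \<le> \<omega>" using d2(2) x su by (auto simp: dist_real_def intro: less_imp_le)
    qed
    have bd: "\<bar>rs_integral f g a u - rs_integral f g a s\<bar> \<le> \<bar>f s\<bar> * \<bar>g u - g s\<bar> + \<omega> * (v u - v s)"
      by (rule rs_diff_bound[OF f d su osc])
    have gd: "\<bar>g u - g s\<bar> < e / (2 * (B + 1))"
    proof (cases "t \<le> t'")
      case True
      then show ?thesis using d1(2) t' dt by (simp add: s_def u_def dist_real_def)
    next
      case False
      then have "\<bar>g t' - g t\<bar> < e / (2 * (B + 1))" using d1(2) t' dt by (simp add: dist_real_def)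
      then show ?thesis using False by (simp add: s_def u_def abs_minus_commute)
    qed
    have "\<bar>f s\<bar> * \<bar>g u - g s\<bar> \<le> B * (e / (2 * (B + 1)))"
      using B su gd B0 by (intro mult_mono) auto
    also have "\<dots> < e / 2" using B0 e by (simp add: field_simps)
    finally have p1: "\<bar>f s\<bar> * \<bar>g u - g s\<bar> < e / 2" .
    have "v u - v s \<le> V" using dom_by_mono_v[OF d, of a s] dom_by_mono_v[OF d, of u T] su by (auto simp: V_def)
    then have "\<omega> * (v u - v s) \<le> \<omega> * V" using om by (intro mult_left_mono) auto
    also have "\<omega> * V < e / 2" using V0 e by (simp add: \<omega>_def field_simps)
    finally have p2: "\<omega> * (v u - v s) < e / 2" .
    have "dist (rs_integral f g a t') (rs_integral f g a t) = \<bar>rs_integral f g a u - rs_integral f g a s\<bar>"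
      by (cases "t \<le> t'") (simp_all add: s_def u_def dist_real_def abs_minus_commute)
    then show "dist (rs_integral f g a t') (rs_integral f g a t) < e" using bd p1 p2 by linarith
  qed
qed


section \<open>Variation\<close>

lemma vs_extend:
  assumes y: "y \<in> variation_sums x a b" and bc: "b \<le> c"
  shows "y + norm (x c - x b) \<in> variation_sums x a c"
proof -
  obtain n t where yt: "y = (\<Sum>i<n. norm (x (t (Suc i)) - x (t i)))" "t 0 = a" "t n = b"
    "\<forall>i<n. t i \<le> t (Suc i)"
    using y unfolding variation_sums_def by blast
  define t' where "t' = t(Suc n := c)"
  have "(\<Sum>i<Suc n. norm (x (t' (Suc i)) - x (t' i))) = y + norm (x c - x b)"
    using yt by (simp add: t'_def)
  moreover have "t' 0 = a" "t' (Suc n) = c" "\<forall>i<Suc n. t' i \<le> t' (Suc i)"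
    using yt bc by (auto simp: t'_def less_Suc_eq)
  ultimately have "\<exists>n' t''. y + norm (x c - x b) = (\<Sum>i<n'. norm (x (t'' (Suc i)) - x (t'' i))) \<and>
      t'' 0 = a \<and> t'' n' = c \<and> (\<forall>i<n'. t'' i \<le> t'' (Suc i))"
    by (intro exI[of _ "Suc n"] exI[of _ t']) auto
  then show ?thesis unfolding variation_sums_def by simp
qed

lemma vs_nonneg: "y \<in> variation_sums x a b \<Longrightarrow> 0 \<le> y"
  unfolding variation_sums_def by (auto intro: sum_nonneg)

lemma vs_ne: "a \<le> b \<Longrightarrow> variation_sums x a b \<noteq> {}"
proof -
  assume ab: "a \<le> b"
  define t where "t = (\<lambda>i::nat. if i = 0 then a else b)"
  have "(\<Sum>i<1. norm (x (t (Suc i)) - x (t i))) \<in> variation_sums x a b"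
    unfolding variation_sums_def using ab by (auto simp: t_def intro!: exI[of _ 1] exI[of _ t])
  then show ?thesis by blast
qed

lemma vs_bdd:
  assumes bv: "bounded_variation x a T" and s: "s \<le> T"
  shows "bdd_above (variation_sums x a s)"
proof -
  obtain M where M: "\<forall>z\<in>variation_sums x a T. z \<le> M" using bv unfolding bounded_variation_def bdd_above_def by blast
  have "y \<le> M" if "y \<in> variation_sums x a s" for y
  proof -
    have "y + norm (x T - x s) \<le> M" using M vs_extend[OF that s] by blast
    then show ?thesis by (smt (verit) norm_ge_zero)
  qed
  then show ?thesis unfolding bdd_above_def by blast
qed

lemma tv_nonneg:
  assumes bv: "bounded_variation x a T" and s: "a \<le> s" "s \<le> T"
  shows "0 \<le> total_variation x a s"
proof -
  obtain y where y: "y \<in> variation_sums x a s" using vs_ne[OF s(1)] by blast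
  have "y \<le> total_variation x a s" unfolding total_variation_def by (rule cSup_upper[OF y vs_bdd[OF bv s(2)]])
  then show ?thesis using vs_nonneg[OF y] by linarith
qed

lemma tv_step:
  assumes bv: "bounded_variation x a T" and s: "a \<le> s" "s \<le> s'" "s' \<le> T"
  shows "total_variation x a s + norm (x s' - x s) \<le> total_variation x a s'"
proof -
  have "Sup (variation_sums x a s) \<le> Sup (variation_sums x a s') - norm (x s' - x s)"
  proof (rule cSup_least[OF vs_ne[OF s(1)]])
    fix y assume y: "y \<in> variation_sums x a s"
    have "y + norm (x s' - x s) \<le> Sup (variation_sums x a s')"
      by (rule cSup_upper[OF vs_extend[OF y s(2)] vs_bdd[OF bv s(3)]])
    then show "y \<le> Sup (variation_sums x a s') - norm (x s' - x s)" by simp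
  qed
  then show ?thesis unfolding total_variation_def by simp
qed

definition Lf :: "(real \<Rightarrow> real^'m) \<Rightarrow> real \<Rightarrow> real" where
  "Lf x s = total_variation x 0 s + s"

lemma Lf_step:
  assumes bv: "bounded_variation x 0 T" and s: "0 \<le> s" "s \<le> s'" "s' \<le> T"
  shows "norm (x s' - x s) + (s' - s) \<le> Lf x s' - Lf x s"
  using tv_step[OF bv s] by (simp add: Lf_def)

lemma Lf_nonneg:
  assumes bv: "bounded_variation x 0 T" and s: "0 \<le> s" "s \<le> T"
  shows "0 \<le> Lf x s"
  using tv_nonneg[OF bv s] s by (simp add: Lf_def)

lemma Lf_mono:
  assumes bv: "bounded_variation x 0 T" and s: "0 \<le> s" "s \<le> s'" "s' \<le> T"
  shows "Lf x s \<le> Lf x s'"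
  using Lf_step[OF bv s] norm_ge_zero[of "x s' - x s"] s by linarith

lemma aug_dom:
  assumes bv: "bounded_variation x 0 T"
  shows "dom_by (\<lambda>s. aug x s j) (Lf x) 0 T"
  unfolding dom_by_def
proof (intro allI impI)
  fix s s' :: real assume s: "0 \<le> s" "s \<le> s'" "s' \<le> T"
  have st: "norm (x s' - x s) + (s' - s) \<le> Lf x s' - Lf x s" by (rule Lf_step[OF bv s])
  show "\<bar>aug x s' j - aug x s j\<bar> \<le> Lf x s' - Lf x s"
  proof (cases j)
    case None
    have "s' - s \<le> Lf x s' - Lf x s" using st norm_ge_zero[of "x s' - x s"] by linarith
    then show ?thesis using s None by (simp add: aug_def)
  next
    case (Some i)
    have "\<bar>x s' $ i - x s $ i\<bar> \<le> norm (x s' - x s)" using component_le_norm_cart[of "x s' - x s" i] by simp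
    then show ?thesis using st s Some by (simp add: aug_def)
  qed
qed

lemma aug_cont:
  assumes "continuous_on S x"
  shows "continuous_on S (\<lambda>s. aug x s j)"
  unfolding aug_def by (cases j) (auto intro: continuous_on_component assms continuous_on_id)

lemma aug_L2:
  assumes bv: "bounded_variation x 0 T" and s: "0 \<le> s" "s \<le> s'" "s' \<le> T"
  shows "L2_set (\<lambda>j. aug x s' j - aug x s j) UNIV \<le> Lf x s' - Lf x s"
proof -
  have "(\<Sum>j\<in>UNIV. (aug x s' j - aug x s j)\<^sup>2) = (s' - s)\<^sup>2 + (\<Sum>i\<in>UNIV. (x s' $ i - x s $ i)\<^sup>2)"
    unfolding UNIV_option_conv by (simp add: sum.reindex aug_def)
  also have "(\<Sum>i\<in>UNIV. (x s' $ i - x s $ i)\<^sup>2) = (norm (x s' - x s))\<^sup>2"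
    unfolding norm_vec_def L2_set_def by (simp add: sum_nonneg)
  finally have "L2_set (\<lambda>j. aug x s' j - aug x s j) UNIV = sqrt ((s' - s)\<^sup>2 + (norm (x s' - x s))\<^sup>2)"
    unfolding L2_set_def by simp
  also have "\<dots> \<le> (s' - s) + norm (x s' - x s)" by (rule sqrt_sum_squares_le_sum) (use s in auto)
  also have "\<dots> \<le> Lf x s' - Lf x s" using Lf_step[OF bv s] by simp
  finally show ?thesis .
qed

lemma sig_cont:
  assumes c: "continuous_on {0..T} x" and bv: "bounded_variation x 0 T"
  shows "continuous_on {0..T} (sig_rev x rw)"
proof (induction rw)
  case Nil
  then show ?case by simp
next
  case (Cons j rw)
  have "continuous_on {0..T} (\<lambda>t. rs_integral (sig_rev x rw) (\<lambda>s. aug x s j) 0 t)"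
    by (rule rs_cont[OF Cons aug_cont[OF c] aug_dom[OF bv]])
  then show ?case by simp
qed


section \<open>Level bounds\<close>

lemma L2_set_sum_le:
  assumes "finite I"
  shows "L2_set (\<lambda>p. \<Sum>i\<in>I. h i p) A \<le> (\<Sum>i\<in>I. L2_set (h i) A)"
  using assms
proof (induction I rule: finite_induct)
  case empty
  then show ?case by (simp add: L2_set_0')
next
  case (insert i I)
  have "L2_set (\<lambda>p. \<Sum>i\<in>insert i I. h i p) A = L2_set (\<lambda>p. h i p + (\<Sum>i\<in>I. h i p)) A"
    using insert by simp
  also have "\<dots> \<le> L2_set (h i) A + L2_set (\<lambda>p. \<Sum>i\<in>I. h i p) A" by (rule L2_set_triangle_ineq)
  also have "\<dots> \<le> L2_set (h i) A + (\<Sum>i\<in>I. L2_set (h i) A)" using insert by simp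
  finally show ?case using insert by simp
qed

lemma L2_set_prod:
  assumes "finite A" "finite B"
  shows "L2_set (\<lambda>p. b (fst p) * a (snd p)) (A \<times> B) = L2_set b A * L2_set a B"
proof -
  have "(\<Sum>p\<in>A \<times> B. (b (fst p) * a (snd p))\<^sup>2) = (\<Sum>j\<in>A. \<Sum>w\<in>B. (b j)\<^sup>2 * (a w)\<^sup>2)"
    by (simp add: sum.cartesian_product power_mult_distrib case_prod_unfold)
  also have "\<dots> = (\<Sum>j\<in>A. (b j)\<^sup>2) * (\<Sum>w\<in>B. (a w)\<^sup>2)" by (simp add: sum_product)
  finally show ?thesis unfolding L2_set_def by (simp add: real_sqrt_mult)
qed

lemma pow_step:
  fixes a b :: real
  assumes "0 \<le> a" "a \<le> b"
  shows "a ^ k / fact k * (b - a) \<le> b ^ Suc k / fact (Suc k) - a ^ Suc k / fact (Suc k)"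
proof -
  have "(\<Sum>i<Suc k. a ^ k) \<le> (\<Sum>i<Suc k. a ^ (Suc k - Suc i) * b ^ i)"
  proof (rule sum_mono)
    fix i assume i: "i \<in> {..<Suc k}"
    have "a ^ k = a ^ (Suc k - Suc i) * a ^ i" using i by (simp add: power_add[symmetric])
    also have "\<dots> \<le> a ^ (Suc k - Suc i) * b ^ i"
      using assms by (intro mult_left_mono power_mono) auto
    finally show "a ^ k \<le> a ^ (Suc k - Suc i) * b ^ i" .
  qed
  then have "(b - a) * (\<Sum>i<Suc k. a ^ k) \<le> (b - a) * (\<Sum>i<Suc k. a ^ (Suc k - Suc i) * b ^ i)"
    using assms by (intro mult_left_mono) auto
  moreover have "(\<Sum>i<Suc k. a ^ k) = real (Suc k) * a ^ k" by simp
  ultimately have "real (Suc k) * a ^ k * (b - a) \<le> (b - a) * (\<Sum>i<Suc k. a ^ (Suc k - Suc i) * b ^ i)"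
    by (simp add: mult.commute)
  also have "\<dots> = b ^ Suc k - a ^ Suc k" by (rule power_diff_sumr2[symmetric])
  finally have h: "real (Suc k) * a ^ k * (b - a) \<le> b ^ Suc k - a ^ Suc k" .
  have f0: "fact k > (0::real)" "real k + 1 > 0" by auto
  have fs: "fact (Suc k) = real (Suc k) * (fact k :: real)" by (rule fact_Suc)
  have "real (Suc k) * a ^ k * (b - a) / fact (Suc k) = (real (Suc k) * (a ^ k * (b - a))) / (real (Suc k) * fact k)"
    unfolding fs by (simp add: mult.assoc)
  also have "\<dots> = a ^ k * (b - a) / fact k" by (rule mult_divide_mult_cancel_left) simp
  finally have "a ^ k / fact k * (b - a) = real (Suc k) * a ^ k * (b - a) / fact (Suc k)"
    by simp
  also have "\<dots> \<le> (b ^ Suc k - a ^ Suc k) / fact (Suc k)"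
    by (rule divide_right_mono[OF h]) simp
  finally show ?thesis by (simp add: diff_divide_distrib)
qed

lemma words_Suc: "{w. length w = Suc k} = (\<lambda>p. fst p # snd p) ` (UNIV \<times> {w. length w = k})"
  by (auto simp: length_Suc_conv image_iff)

lemma sig_level:
  fixes x :: "real \<Rightarrow> real^'m"
  assumes c: "continuous_on {0..T} x" and bv: "bounded_variation x 0 T"
  shows "\<forall>t\<in>{0..T}. L2_set (\<lambda>rw. sig_rev x rw t) {rw. length rw = k} \<le> Lf x t ^ k / fact k"
proof (induction k)
  case 0
  have "{rw :: 'm option list. length rw = 0} = {[]}" by auto
  then show ?case by simp
next
  case (Suc k)
  show ?case
  proof
    fix t assume t: "t \<in> {0..T}"
    define W where "W = {rw :: 'm option list. length rw = k}"
    have finW: "finite W" unfolding W_def using finite_lists_length_eq[of "UNIV :: 'm option set" k] by simp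
    define G where "G p = sig_rev x (fst p # snd p) t" for p :: "'m option \<times> 'm option list"
    define sN where "sN N p = rsum (sig_rev x (snd p)) (\<lambda>s. aug x s (fst p)) (Suc N) (unif 0 t N) (unif 0 t N)"
      for N and p :: "'m option \<times> 'm option list"
    have conv: "(\<lambda>N. sN N p) \<longlonglongrightarrow> G p" for p
    proof -
      have "has_rs_integral (sig_rev x (snd p)) (\<lambda>s. aug x s (fst p)) 0 t
          (rs_integral (sig_rev x (snd p)) (\<lambda>s. aug x s (fst p)) 0 t)"
        by (rule rs_integral_has[OF continuous_on_subset[OF sig_cont[OF c bv]] dom_by_mono[OF aug_dom[OF bv]]])
           (use t in auto)
      from rs_unif_tendsto[OF this] t show ?thesis unfolding sN_def G_def by (cases p) auto
    qed
    have convL2: "(\<lambda>N. L2_set (sN N) (UNIV \<times> W)) \<longlonglongrightarrow> L2_set G (UNIV \<times> W)"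
      unfolding L2_set_def by (intro tendsto_intros conv)
    define un where "un N = unif 0 t N" for N
    have bnd: "L2_set (sN N) (UNIV \<times> W) \<le> Lf x t ^ Suc k / fact (Suc k)" for N
    proof -
      have P: "tpart 0 t (Suc N) (un N) (un N) (t / real (Suc N) + 1)"
        unfolding un_def by (rule tpart_unif) (use t in auto)
      have ur: "0 \<le> un N i" "un N i \<le> t" if "i \<le> Suc N" for i using tpart_range[OF P that] by auto
      have um: "un N i \<le> un N (Suc i)" if "i < Suc N" for i using P that unfolding tpart_def by auto
      have u0: "un N 0 = 0" "un N (Suc N) = t" using P unfolding tpart_def by auto
      define a where "a i rw = sig_rev x rw (un N i)" for i rw
      define b where "b i j = aug x (un N (Suc i)) j - aug x (un N i) j" for i j
      have "sN N = (\<lambda>p. \<Sum>i<Suc N. b i (fst p) * a i (snd p))"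
        by (auto simp: sN_def rsum_def a_def b_def un_def mult.commute)
      then have "L2_set (sN N) (UNIV \<times> W) \<le> (\<Sum>i<Suc N. L2_set (\<lambda>p. b i (fst p) * a i (snd p)) (UNIV \<times> W))"
        using L2_set_sum_le[of "{..<Suc N}" "\<lambda>i p. b i (fst p) * a i (snd p)"] by simp
      also have "\<dots> = (\<Sum>i<Suc N. L2_set (b i) UNIV * L2_set (a i) W)"
        using finW by (simp add: L2_set_prod)
      also have "\<dots> \<le> (\<Sum>i<Suc N. (Lf x (un N (Suc i)) - Lf x (un N i)) * (Lf x (un N i) ^ k / fact k))"
      proof (rule sum_mono)
        fix i assume i: "i \<in> {..<Suc N}"
        have s: "0 \<le> un N i" "un N i \<le> un N (Suc i)" "un N (Suc i) \<le> T"
          using ur[of i] ur[of "Suc i"] um[of i] i t by auto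
        have "L2_set (b i) UNIV \<le> Lf x (un N (Suc i)) - Lf x (un N i)"
          unfolding b_def by (rule aug_L2[OF bv s])
        moreover have "L2_set (a i) W \<le> Lf x (un N i) ^ k / fact k"
          using Suc s unfolding a_def W_def by auto
        moreover have "Lf x (un N i) \<le> Lf x (un N (Suc i))" by (rule Lf_mono[OF bv s])
        ultimately show "L2_set (b i) UNIV * L2_set (a i) W \<le> (Lf x (un N (Suc i)) - Lf x (un N i)) * (Lf x (un N i) ^ k / fact k)"
          by (intro mult_mono) auto
      qed
      also have "\<dots> \<le> (\<Sum>i<Suc N. Lf x (un N (Suc i)) ^ Suc k / fact (Suc k) - Lf x (un N i) ^ Suc k / fact (Suc k))"
      proof (rule sum_mono)
        fix i assume i: "i \<in> {..<Suc N}"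
        have s: "0 \<le> un N i" "un N i \<le> un N (Suc i)" "un N (Suc i) \<le> T"
          using ur[of i] ur[of "Suc i"] um[of i] i t by auto
        have "0 \<le> Lf x (un N i)" by (rule Lf_nonneg[OF bv]) (use s in auto)
        moreover have "Lf x (un N i) \<le> Lf x (un N (Suc i))" using Lf_step[OF bv s] s norm_ge_zero[of "x (un N (Suc i)) - x (un N i)"] by linarith
        ultimately show "(Lf x (un N (Suc i)) - Lf x (un N i)) * (Lf x (un N i) ^ k / fact k) \<le> Lf x (un N (Suc i)) ^ Suc k / fact (Suc k) - Lf x (un N i) ^ Suc k / fact (Suc k)"
          using pow_step[of "Lf x (un N i)" "Lf x (un N (Suc i))" k] by (simp add: mult.commute)
      qed
      also have "\<dots> = Lf x t ^ Suc k / fact (Suc k) - Lf x 0 ^ Suc k / fact (Suc k)"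
        by (subst sum_lessThan_telescope[of "\<lambda>i. Lf x (un N i) ^ Suc k / fact (Suc k)"]) (simp add: u0)
      also have "\<dots> \<le> Lf x t ^ Suc k / fact (Suc k)"
        using Lf_nonneg[OF bv, of 0] t by auto
      finally show ?thesis .
    qed
    have G_bnd: "L2_set G (UNIV \<times> W) \<le> Lf x t ^ Suc k / fact (Suc k)"
      using convL2 bnd by (intro LIMSEQ_le_const2) auto
    have "L2_set (\<lambda>rw. sig_rev x rw t) {rw. length rw = Suc k} = L2_set G (UNIV \<times> W)"
    proof -
      have inj: "inj_on (\<lambda>p. fst p # snd p) (UNIV \<times> W)" by (auto simp: inj_on_def)
      show ?thesis unfolding words_Suc L2_set_def W_def[symmetric]
        by (simp add: sum.reindex[OF inj] G_def)
    qed
    then show "L2_set (\<lambda>rw. sig_rev x rw t) {rw. length rw = Suc k} \<le> Lf x t ^ Suc k / fact (Suc k)"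
      using G_bnd by simp
  qed
qed


lemma finite_words: "finite (words p :: 'm::finite option list set)"
  unfolding words_def using finite_lists_length_le[of "UNIV :: 'm option set" p] by simp

lemma exp_partial:
  fixes y :: real
  assumes "0 \<le> y"
  shows "(\<Sum>k\<le>p. y ^ k / fact k) \<le> exp y"
proof -
  have eq: "(\<lambda>n. y ^ n /\<^sub>R fact n) = (\<lambda>n. y ^ n / fact n)" by (simp add: divide_inverse mult.commute)
  have s: "(\<lambda>n. y ^ n / fact n) sums exp y" using exp_converges[of y] unfolding eq .
  have "(\<Sum>k\<in>{..p}. y ^ k / fact k) \<le> suminf (\<lambda>n. y ^ n / fact n)"
    by (rule sum_le_suminf[OF sums_summable[OF s]]) (use assms in auto)
  then show ?thesis using sums_unique[OF s] by simp
qed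

lemma sig_sq_sum:
  fixes x :: "real \<Rightarrow> real^'m"
  assumes c: "continuous_on {0..T} x" and bv: "bounded_variation x 0 T" and T: "0 \<le> T"
  shows "(\<Sum>rw\<in>words p. (sig_rev x rw T)\<^sup>2) \<le> (\<Sum>k\<le>p. Lf x T ^ k / fact k)\<^sup>2"
proof (induction p)
  have lvl: "(\<Sum>rw\<in>{rw :: 'm option list. length rw = k}. (sig_rev x rw T)\<^sup>2) \<le> (Lf x T ^ k / fact k)\<^sup>2" for k
  proof -
    have fin: "finite {rw :: 'm option list. length rw = k}"
      using finite_lists_length_eq[of "UNIV :: 'm option set" k] by simp
    have "L2_set (\<lambda>rw. sig_rev x rw T) {rw. length rw = k} \<le> Lf x T ^ k / fact k"
      using sig_level[OF c bv, of k] T by auto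
    then have "(L2_set (\<lambda>rw. sig_rev x rw T) {rw. length rw = k})\<^sup>2 \<le> (Lf x T ^ k / fact k)\<^sup>2"
      by (intro power_mono) auto
    then show ?thesis unfolding L2_set_def by (simp add: sum_nonneg)
  qed
  case 0
  have "words 0 = {rw :: 'm option list. length rw = 0}" by (auto simp: words_def)
  then show ?case using lvl[of 0] by simp
next
  case (Suc p)
  have lvl: "(\<Sum>rw\<in>{rw :: 'm option list. length rw = k}. (sig_rev x rw T)\<^sup>2) \<le> (Lf x T ^ k / fact k)\<^sup>2" for k
  proof -
    have "L2_set (\<lambda>rw. sig_rev x rw T) {rw. length rw = k} \<le> Lf x T ^ k / fact k"
      using sig_level[OF c bv, of k] T by auto
    then have "(L2_set (\<lambda>rw. sig_rev x rw T) {rw. length rw = k})\<^sup>2 \<le> (Lf x T ^ k / fact k)\<^sup>2"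
      by (intro power_mono) auto
    then show ?thesis unfolding L2_set_def by (simp add: sum_nonneg)
  qed
  have split: "words (Suc p) = words p \<union> {rw :: 'm option list. length rw = Suc p}"
    by (auto simp: words_def)
  have disj: "words p \<inter> {rw :: 'm option list. length rw = Suc p} = {}" by (auto simp: words_def)
  have fin2: "finite {rw :: 'm option list. length rw = Suc p}"
    using finite_lists_length_eq[of "UNIV :: 'm option set" "Suc p"] by simp
  have L0: "0 \<le> Lf x T" by (rule Lf_nonneg[OF bv]) (use T in auto)
  have S0: "0 \<le> (\<Sum>k\<le>p. Lf x T ^ k / fact k)" using L0 by (intro sum_nonneg) auto
  have c0: "0 \<le> Lf x T ^ Suc p / fact (Suc p)" using L0 by simp
  have "(\<Sum>rw\<in>words (Suc p). (sig_rev x rw T)\<^sup>2) =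
        (\<Sum>rw\<in>words p. (sig_rev x rw T)\<^sup>2) + (\<Sum>rw\<in>{rw. length rw = Suc p}. (sig_rev x rw T)\<^sup>2)"
    unfolding split by (rule sum.union_disjoint[OF finite_words fin2 disj])
  also have "\<dots> \<le> (\<Sum>k\<le>p. Lf x T ^ k / fact k)\<^sup>2 + (Lf x T ^ Suc p / fact (Suc p))\<^sup>2"
    using Suc lvl[of "Suc p"] by linarith
  also have "\<dots> \<le> ((\<Sum>k\<le>p. Lf x T ^ k / fact k) + Lf x T ^ Suc p / fact (Suc p))\<^sup>2"
    unfolding power2_sum using mult_nonneg_nonneg[OF S0 c0] by linarith
  finally show ?case by simp
qed

lemma sig_total:
  fixes x :: "real \<Rightarrow> real^'m"
  assumes c: "continuous_on {0..T} x" and bv: "bounded_variation x 0 T" and T: "0 \<le> T"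
  shows "L2_set (signature T x) (words p) \<le> exp (total_variation x 0 T + T)"
proof -
  have inj: "inj_on rev (words p :: 'm option list set)" by (auto simp: inj_on_def)
  have im: "rev ` (words p :: 'm option list set) = words p"
    unfolding words_def by (auto simp: image_iff, metis length_rev rev_rev_ident)
  have "(\<Sum>w\<in>words p. (signature T x w)\<^sup>2) = (\<Sum>w\<in>words p. (sig_rev x (rev w) T)\<^sup>2)"
    by (simp add: signature_def)
  also have "\<dots> = (\<Sum>w\<in>rev ` words p. (sig_rev x w T)\<^sup>2)"
    by (simp add: sum.reindex[OF inj])
  also have "\<dots> = (\<Sum>w\<in>words p. (sig_rev x w T)\<^sup>2)" using im by simp
  finally have e: "(\<Sum>w\<in>words p. (signature T x w)\<^sup>2) = (\<Sum>w\<in>words p. (sig_rev x w T)\<^sup>2)" .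
  have L0: "0 \<le> Lf x T" by (rule Lf_nonneg[OF bv]) (use T in auto)
  have S0: "0 \<le> (\<Sum>k\<le>p. Lf x T ^ k / fact k)" using L0 by (intro sum_nonneg) auto
  have "L2_set (signature T x) (words p) \<le> sqrt ((\<Sum>k\<le>p. Lf x T ^ k / fact k)\<^sup>2)"
    unfolding L2_set_def e by (rule real_sqrt_le_mono[OF sig_sq_sum[OF c bv T]])
  also have "\<dots> = (\<Sum>k\<le>p. Lf x T ^ k / fact k)" using S0 by simp
  also have "\<dots> \<le> exp (Lf x T)" by (rule exp_partial[OF L0])
  finally show ?thesis by (simp add: Lf_def)
qed


lemma ln1exp_lip:
  fixes a b :: real
  assumes "a \<le> b"
  shows "0 \<le> ln (1 + exp b) - ln (1 + exp a) \<and> ln (1 + exp b) - ln (1 + exp a) \<le> b - a"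
proof
  show "0 \<le> ln (1 + exp b) - ln (1 + exp a)" using assms by (simp add: add_pos_pos)
  have "1 + exp b \<le> exp (b - a) * (1 + exp a)"
  proof -
    have "1 \<le> exp (b - a)" using assms by simp
    moreover have "exp (b - a) * exp a = exp b" by (simp add: exp_add[symmetric])
    ultimately show ?thesis by (simp add: algebra_simps)
  qed
  moreover have "0 < 1 + exp b" "0 < exp (b - a) * (1 + exp a)"
    by (auto intro!: add_pos_pos mult_pos_pos)
  ultimately have "ln (1 + exp b) \<le> ln (exp (b - a) * (1 + exp a))"
    by simp
  also have "\<dots> = (b - a) + ln (1 + exp a)"
  proof -
    have "0 < 1 + exp a" by (auto intro: add_pos_pos)
    then show ?thesis by (simp add: ln_mult)
  qed
  finally show "ln (1 + exp b) - ln (1 + exp a) \<le> b - a" by simp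
qed

lemma ll_lip: "\<bar>logistic_loss y a - logistic_loss y b\<bar> \<le> \<bar>a - b\<bar>"
proof -
  have main: "\<bar>logistic_loss y a - logistic_loss y b\<bar> \<le> b - a" if "a \<le> b" for a b
    using ln1exp_lip[OF that] that by (cases y) (auto simp: logistic_loss_def)
  show ?thesis
  proof (cases "a \<le> b")
    case True then show ?thesis using main[OF True] by simp
  next
    case False then show ?thesis using main[of b a] by (simp add: abs_minus_commute)
  qed
qed

definition Lp :: "nat \<Rightarrow> ('m option list \<Rightarrow> real) \<times> (real^'q)
    \<Rightarrow> ('m option list \<Rightarrow> real) \<times> (real^'q) \<times> bool \<Rightarrow> real" where
  "Lp p \<theta> ob = (\<Sum>w\<in>words p. fst ob w * fst \<theta> w) + fst (snd ob) \<bullet> snd \<theta>"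

definition Lo :: "nat \<Rightarrow> ('m option list \<Rightarrow> real) \<times> (real^'q)
    \<Rightarrow> ('m option list \<Rightarrow> real) \<times> (real^'q) \<times> bool \<Rightarrow> real" where
  "Lo p \<theta> ob = logistic_loss (snd (snd ob)) (Lp p \<theta> ob)"

lemma lin_obs: "logistic_loss y' (lin_pred p T x z' \<theta>) = Lo p \<theta> (obs T x z' y')"
  by (simp add: obs_def Lo_def Lp_def lin_pred_def signature_def)

lemma Lp_meas: "Lp p \<theta> \<in> borel_measurable obs_space"
  unfolding Lp_def obs_space_def by measurable

lemma Lo_meas: "Lo p \<theta> \<in> borel_measurable obs_space"
  unfolding Lo_def logistic_loss_def obs_space_def Lp_def by measurable

definition Good :: "nat \<Rightarrow> real \<Rightarrow> real \<Rightarrow> (('m option list \<Rightarrow> real) \<times> (real^'q) \<times> bool) set" where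
  "Good p E C = {ob \<in> space obs_space. L2_set (fst ob) (words p) \<le> E \<and> norm (fst (snd ob)) \<le> C}"

lemma Good_sets: "Good p E C \<in> sets obs_space"
  unfolding Good_def L2_set_def obs_space_def by measurable

lemma Lp_lip:
  assumes "ob \<in> Good p E C"
  shows "\<bar>Lp p \<theta> ob - Lp p \<eta> ob\<bar> \<le> (E + C) * eucl_norm_par p (fst \<theta> - fst \<eta>, snd \<theta> - snd \<eta>)"
proof -
  define d where "d w = fst \<theta> w - fst \<eta> w" for w
  define d' where "d' = snd \<theta> - snd \<eta>"
  define e where "e = eucl_norm_par p (fst \<theta> - fst \<eta>, snd \<theta> - snd \<eta>)"
  have E: "L2_set (fst ob) (words p) \<le> E" and C: "norm (fst (snd ob)) \<le> C"
    using assms unfolding Good_def by auto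
  have E0: "0 \<le> E" using E L2_set_nonneg[of "fst ob" "words p"] by linarith
  have C0: "0 \<le> C" using C norm_ge_zero[of "fst (snd ob)"] by linarith
  have e_def': "e = sqrt ((L2_set d (words p))\<^sup>2 + (norm d')\<^sup>2)"
    unfolding e_def eucl_norm_par_def L2_set_def d_def d'_def by (simp add: sum_nonneg)
  have "Lp p \<theta> ob - Lp p \<eta> ob = (\<Sum>w\<in>words p. fst ob w * d w) + fst (snd ob) \<bullet> d'"
    unfolding Lp_def d_def d'_def by (simp add: sum_subtractf algebra_simps inner_diff_right)
  then have "\<bar>Lp p \<theta> ob - Lp p \<eta> ob\<bar> \<le> \<bar>\<Sum>w\<in>words p. fst ob w * d w\<bar> + \<bar>fst (snd ob) \<bullet> d'\<bar>"
    by simp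
  also have "\<dots> \<le> L2_set (fst ob) (words p) * L2_set d (words p) + norm (fst (snd ob)) * norm d'"
  proof (rule add_mono)
    have "\<bar>\<Sum>w\<in>words p. fst ob w * d w\<bar> \<le> (\<Sum>w\<in>words p. \<bar>fst ob w\<bar> * \<bar>d w\<bar>)"
      by (rule order_trans[OF sum_abs]) (simp add: abs_mult)
    also have "\<dots> \<le> L2_set (fst ob) (words p) * L2_set d (words p)" by (rule L2_set_mult_ineq)
    finally show "\<bar>\<Sum>w\<in>words p. fst ob w * d w\<bar> \<le> L2_set (fst ob) (words p) * L2_set d (words p)" .
    show "\<bar>fst (snd ob) \<bullet> d'\<bar> \<le> norm (fst (snd ob)) * norm d'" by (rule Cauchy_Schwarz_ineq2)
  qed
  also have "\<dots> \<le> E * e + C * e"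
  proof (rule add_mono)
    have "L2_set d (words p) \<le> e" unfolding e_def'
      by (rule real_le_rsqrt) simp
    then show "L2_set (fst ob) (words p) * L2_set d (words p) \<le> E * e"
      using E E0 by (intro mult_mono) (auto simp: e_def')
    have "norm d' \<le> e" unfolding e_def' by (rule real_le_rsqrt) simp
    then show "norm (fst (snd ob)) * norm d' \<le> C * e"
      using C C0 by (intro mult_mono) (auto simp: e_def')
  qed
  finally show ?thesis by (simp add: e_def algebra_simps)
qed

lemma hoeff_any:
  fixes f :: "'a \<Rightarrow> real"
  assumes P: "prob_space M" and f: "f \<in> borel_measurable M" and ab: "AE x in M. f x \<in> {a..b}"
  shows "(\<integral>\<^sup>+x. ennreal (exp (l * (f x - prob_space.expectation M f))) \<partial>M) \<le> ennreal (exp (l\<^sup>2 * (b - a)\<^sup>2 / 8))"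
proof -
  interpret prob_space M by (rule P)
  interpret A: interval_bounded_random_variable M f a b
    by unfold_locales (use f ab in auto)
  consider "l > 0" | "l < 0" | "l = 0" by linarith
  then show ?thesis
  proof cases
    case 1
    then show ?thesis by (rule A.Hoeffdings_lemma_nn_integral)
  next
    case 2
    interpret B: interval_bounded_random_variable M "\<lambda>x. - f x" "-b" "-a"
      by unfold_locales (use f ab in \<open>auto elim!: eventually_mono\<close>)
    have "(\<integral>\<^sup>+x. ennreal (exp ((-l) * (- f x - expectation (\<lambda>x. - f x)))) \<partial>M) \<le> ennreal (exp ((-l)\<^sup>2 * (-a - -b)\<^sup>2 / 8))"
      by (rule B.Hoeffdings_lemma_nn_integral) (use 2 in simp)
    then show ?thesis by (simp add: algebra_simps)
  next
    case 3
    then show ?thesis by (simp add: nn_integral_const emeasure_space_1)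
  qed
qed

theorem lemma1:
  fixes M :: "'w measure"
    and T CX Cz r :: real and p n :: nat
    and x0 :: "real^'m"
    and X :: "'w \<Rightarrow> real \<Rightarrow> real^'m" and z :: "'w \<Rightarrow> real^'q" and y :: "'w \<Rightarrow> bool"
    and Xs :: "nat \<Rightarrow> 'w \<Rightarrow> real \<Rightarrow> real^'m" and zs :: "nat \<Rightarrow> 'w \<Rightarrow> real^'q"
    and ys :: "nat \<Rightarrow> 'w \<Rightarrow> bool"
  assumes "prob_space M"
    and "T > 0" and "r > 0" and "n > 0"
    and paths: "\<forall>\<omega>\<in>space M. continuous_on {0..T} (X \<omega>) \<and> bounded_variation (X \<omega>) 0 T \<and> X \<omega> 0 = x0"
    and paths_i: "\<forall>i<n. \<forall>\<omega>\<in>space M. continuous_on {0..T} (Xs i \<omega>) \<and> bounded_variation (Xs i \<omega>) 0 T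
                              \<and> Xs i \<omega> 0 = x0"
    and meas: "(\<lambda>\<omega>. obs T (X \<omega>) (z \<omega>) (y \<omega>)) \<in> measurable M obs_space"
    and meas_i: "\<forall>i<n. (\<lambda>\<omega>. obs T (Xs i \<omega>) (zs i \<omega>) (ys i \<omega>)) \<in> measurable M obs_space"
    and indep: "prob_space.indep_vars M (\<lambda>_. obs_space)
                  (\<lambda>i \<omega>. obs T (Xs i \<omega>) (zs i \<omega>) (ys i \<omega>)) {..<n}"
    and ident: "\<forall>i<n. distr M obs_space (\<lambda>\<omega>. obs T (Xs i \<omega>) (zs i \<omega>) (ys i \<omega>))
                      = distr M obs_space (\<lambda>\<omega>. obs T (X \<omega>) (z \<omega>) (y \<omega>))"
    and bX: "AE \<omega> in M. total_variation (X \<omega>) 0 T < CX"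
    and bz: "AE \<omega> in M. norm (z \<omega>) < Cz"
  defines "Z \<equiv> \<lambda>\<theta> \<omega>.
              (1 / real n) * (\<Sum>i<n. logistic_loss (ys i \<omega>) (lin_pred p T (Xs i \<omega>) (zs i \<omega>) \<theta>))
              - prob_space.expectation M
                  (\<lambda>\<omega>'. logistic_loss (y \<omega>') (lin_pred p T (X \<omega>') (z \<omega>') \<theta>))"
    and "D \<equiv> \<lambda>\<theta> \<eta>. 2 * (Cz + exp (CX + T)) / sqrt (real n)
                      * eucl_norm_par p (fst \<theta> - fst \<eta>, snd \<theta> - snd \<eta>)"
  shows "(\<forall>\<theta>\<in>ball_par p r. prob_space.expectation M (Z \<theta>) = 0) \<and>
         (\<forall>\<theta>\<in>ball_par p r. \<forall>\<eta>\<in>ball_par p r. \<forall>lam::real.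
            prob_space.expectation M (\<lambda>\<omega>. exp (lam * (Z \<theta> \<omega> - Z \<eta> \<omega>)))
              \<le> exp (lam\<^sup>2 * (D \<theta> \<eta>)\<^sup>2 / 2))"
proof -
  interpret P: prob_space M by (rule assms(1))
  note Lo_meas[measurable]
  define oX where "oX \<omega> = obs T (X \<omega>) (z \<omega>) (y \<omega>)" for \<omega>
  define oi where "oi i \<omega> = obs T (Xs i \<omega>) (zs i \<omega>) (ys i \<omega>)" for i \<omega>
  define E0 where "E0 = exp (CX + T)"
  define K where "K = E0 + Cz"
  define Gd :: "(('m option list \<Rightarrow> real) \<times> (real^'q) \<times> bool) set" where "Gd = Good p E0 Cz"
  have mX: "oX \<in> M \<rightarrow>\<^sub>M obs_space" using meas unfolding oX_def .
  have mi: "oi i \<in> M \<rightarrow>\<^sub>M obs_space" if "i < n" for i using meas_i that unfolding oi_def by blast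
  have "AE \<omega> in M. 0 \<le> Cz" using bz by (rule eventually_mono) (meson norm_ge_zero order.trans less_imp_le)
  then have Cz0: "0 \<le> Cz" using P.AE_const by blast
  have K0: "0 \<le> K" using Cz0 by (simp add: K_def E0_def)
  have Gd_sets: "Gd \<in> sets obs_space" unfolding Gd_def by (rule Good_sets)
  have Gd_space: "Gd \<subseteq> space obs_space" unfolding Gd_def Good_def by auto
  have AEX: "AE \<omega> in M. oX \<omega> \<in> Gd"
  proof -
    have "AE \<omega> in M. \<omega> \<in> space M \<and> total_variation (X \<omega>) 0 T < CX \<and> norm (z \<omega>) < Cz"
      using AE_space bX bz by eventually_elim auto
    then show ?thesis
    proof (rule eventually_mono)
      fix \<omega> assume \<omega>: "\<omega> \<in> space M \<and> total_variation (X \<omega>) 0 T < CX \<and> norm (z \<omega>) < Cz"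
      have sp: "oX \<omega> \<in> space obs_space" using measurable_space[OF mX] \<omega> by blast
      have "L2_set (signature T (X \<omega>)) (words p) \<le> exp (total_variation (X \<omega>) 0 T + T)"
        by (rule sig_total) (use paths \<omega> assms(2) in auto)
      also have "\<dots> \<le> E0" using \<omega> by (simp add: E0_def)
      finally show "oX \<omega> \<in> Gd" using sp \<omega> by (simp add: Gd_def Good_def oX_def obs_def)
    qed
  qed
  have dist_eq: "distr M obs_space (oi i) = distr M obs_space oX" if "i < n" for i
    using ident that unfolding oi_def[abs_def] oX_def[abs_def] by blast
  have AEi: "AE \<omega> in M. oi i \<omega> \<in> Gd" if i: "i < n" for i
  proof -
    have set_eq: "{ob \<in> space obs_space. ob \<in> Gd} = Gd" using Gd_space by auto
    have "AE ob in distr M obs_space oX. ob \<in> Gd"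
      using AEX AE_distr_iff[OF mX, of "\<lambda>ob. ob \<in> Gd"] Gd_sets set_eq by simp
    then have "AE ob in distr M obs_space (oi i). ob \<in> Gd"
      unfolding dist_eq[OF i] .
    then show ?thesis using AE_distr_iff[OF mi[OF i], of "\<lambda>ob. ob \<in> Gd"] Gd_sets set_eq by simp
  qed
  have int_eq: "P.expectation (\<lambda>\<omega>. g (oi i \<omega>)) = P.expectation (\<lambda>\<omega>. g (oX \<omega>))"
    if i: "i < n" and g: "g \<in> borel_measurable obs_space" for i and g :: "_ \<Rightarrow> real"
  proof -
    have "P.expectation (\<lambda>\<omega>. g (oi i \<omega>)) = integral\<^sup>L (distr M obs_space (oi i)) g"
      by (rule integral_distr[OF mi[OF i] g, symmetric])
    also have "\<dots> = integral\<^sup>L (distr M obs_space oX) g"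
      using dist_eq[OF i] by simp
    also have "\<dots> = P.expectation (\<lambda>\<omega>. g (oX \<omega>))" by (rule integral_distr[OF mX g])
    finally show ?thesis .
  qed
  have Lo_bnd: "\<exists>B. \<forall>ob\<in>Gd. \<bar>Lo p \<theta> ob\<bar> \<le> B" for \<theta>
  proof -
    define \<theta>0 :: "('m option list \<Rightarrow> real) \<times> (real^'q)" where "\<theta>0 = ((\<lambda>_. 0), 0)"
    have "\<bar>Lo p \<theta> ob\<bar> \<le> K * eucl_norm_par p (fst \<theta> - fst \<theta>0, snd \<theta> - snd \<theta>0) + ln 2" if ob: "ob \<in> Gd" for ob
    proof -
      have "\<bar>Lo p \<theta> ob - Lo p \<theta>0 ob\<bar> \<le> \<bar>Lp p \<theta> ob - Lp p \<theta>0 ob\<bar>" unfolding Lo_def by (rule ll_lip)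
      also have "\<dots> \<le> K * eucl_norm_par p (fst \<theta> - fst \<theta>0, snd \<theta> - snd \<theta>0)"
        using Lp_lip[of ob p E0 Cz] ob unfolding Gd_def K_def by blast
      finally have a: "\<bar>Lo p \<theta> ob - Lo p \<theta>0 ob\<bar> \<le> K * eucl_norm_par p (fst \<theta> - fst \<theta>0, snd \<theta> - snd \<theta>0)" .
      have b: "Lo p \<theta>0 ob = ln 2" by (simp add: Lo_def Lp_def \<theta>0_def logistic_loss_def)
      have "0 \<le> ln (2::real)" by simp
      then show ?thesis using a b by linarith
    qed
    then show ?thesis by blast
  qed
  have intg_i: "integrable M (\<lambda>\<omega>. Lo p \<theta> (oi i \<omega>))" if i: "i < n" for i \<theta>
  proof -
    obtain B where B: "\<forall>ob\<in>Gd. \<bar>Lo p \<theta> ob\<bar> \<le> B" using Lo_bnd by blast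
    show ?thesis
    proof (rule P.integrable_const_bound)
      show "AE \<omega> in M. norm (Lo p \<theta> (oi i \<omega>)) \<le> B" using AEi[OF i] by (rule eventually_mono) (use B in auto)
      show "(\<lambda>\<omega>. Lo p \<theta> (oi i \<omega>)) \<in> borel_measurable M" using mi[OF i] by measurable
    qed
  qed
  define m where "m \<theta> = P.expectation (\<lambda>\<omega>. Lo p \<theta> (oX \<omega>))" for \<theta>
  have Eoi: "P.expectation (\<lambda>\<omega>. Lo p \<theta> (oi i \<omega>)) = m \<theta>" if i: "i < n" for i \<theta>
    unfolding m_def by (rule int_eq[OF i]) measurable
  have Zeq: "Z \<theta> = (\<lambda>\<omega>. (1 / real n) * (\<Sum>i<n. Lo p \<theta> (oi i \<omega>)) - m \<theta>)" for \<theta>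
    unfolding Z_def m_def oi_def oX_def by (simp add: lin_obs)
  have n0: "real n > 0" using assms(4) by simp
  have part1: "P.expectation (Z \<theta>) = 0" for \<theta>
  proof -
    have isum: "integrable M (\<lambda>\<omega>. (1 / real n) * (\<Sum>i<n. Lo p \<theta> (oi i \<omega>)))"
    proof -
      have "integrable M (\<lambda>\<omega>. \<Sum>i<n. Lo p \<theta> (oi i \<omega>))" by (rule Bochner_Integration.integrable_sum) (simp add: intg_i)
      then show ?thesis by (rule integrable_mult_right)
    qed
    have "P.expectation (Z \<theta>) = P.expectation (\<lambda>\<omega>. (1 / real n) * (\<Sum>i<n. Lo p \<theta> (oi i \<omega>))) - P.expectation (\<lambda>\<omega>. m \<theta>)"
      unfolding Zeq by (rule Bochner_Integration.integral_diff[OF isum]) simp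
    also have "\<dots> = (1 / real n) * (\<Sum>i<n. P.expectation (\<lambda>\<omega>. Lo p \<theta> (oi i \<omega>))) - m \<theta>"
      by (simp add: Bochner_Integration.integral_sum intg_i P.prob_space del: of_nat_Suc)
    also have "\<dots> = 0" using n0 by (simp add: Eoi)
    finally show ?thesis .
  qed
  have part2: "P.expectation (\<lambda>\<omega>. exp (lam * (Z \<theta> \<omega> - Z \<eta> \<omega>))) \<le> exp (lam\<^sup>2 * (D \<theta> \<eta>)\<^sup>2 / 2)"
    for \<theta> \<eta> lam
  proof -
    define e where "e = eucl_norm_par p (fst \<theta> - fst \<eta>, snd \<theta> - snd \<eta>)"
    define c where "c = K * e"
    define G where "G ob = Lo p \<theta> ob - Lo p \<eta> ob" for ob
    define \<mu> where "\<mu> = m \<theta> - m \<eta>"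
    define Y where "Y i \<omega> = (G (oi i \<omega>) - \<mu>) / real n" for i \<omega>
    have G_meas[measurable]: "G \<in> borel_measurable obs_space" unfolding G_def by measurable
    have Gb: "\<bar>G ob\<bar> \<le> c" if "ob \<in> Gd" for ob
    proof -
      have "\<bar>G ob\<bar> \<le> \<bar>Lp p \<theta> ob - Lp p \<eta> ob\<bar>" unfolding G_def Lo_def by (rule ll_lip)
      also have "\<dots> \<le> c" using Lp_lip[of ob p E0 Cz \<theta> \<eta>] that unfolding Gd_def c_def K_def e_def by blast
      finally show ?thesis .
    qed
    have prodeq: "exp (lam * (Z \<theta> \<omega> - Z \<eta> \<omega>)) = (\<Prod>i<n. exp (lam * Y i \<omega>))" for \<omega>
    proof -
      have "(\<Sum>i<n. Y i \<omega>) = ((\<Sum>i<n. Lo p \<theta> (oi i \<omega>)) - (\<Sum>i<n. Lo p \<eta> (oi i \<omega>)) - real n * \<mu>) / real n"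
        unfolding Y_def G_def by (simp add: sum_divide_distrib[symmetric] sum_subtractf)
      also have "\<dots> = Z \<theta> \<omega> - Z \<eta> \<omega>" unfolding Zeq \<mu>_def using n0 by (simp add: field_simps)
      finally have "Z \<theta> \<omega> - Z \<eta> \<omega> = (\<Sum>i<n. Y i \<omega>)" by simp
      then show ?thesis by (simp add: sum_distrib_left exp_sum)
    qed
    have Y_meas: "(\<lambda>\<omega>. Y i \<omega>) \<in> borel_measurable M" if "i < n" for i
      unfolding Y_def using mi[OF that] by measurable
    have EY_meas: "(\<lambda>\<omega>. exp (lam * Y i \<omega>)) \<in> borel_measurable M" if "i < n" for i
      unfolding Y_def using mi[OF that] by measurable
    have indepY: "P.indep_vars (\<lambda>_. borel) (\<lambda>i \<omega>. ennreal (exp (lam * Y i \<omega>))) {..<n}"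
    proof -
      have "P.indep_vars (\<lambda>_. borel) (\<lambda>i \<omega>. (\<lambda>ob. ennreal (exp (lam * ((G ob - \<mu>) / real n)))) (oi i \<omega>)) {..<n}"
        by (rule P.indep_vars_compose2[OF indep[folded oi_def[abs_def]]]) measurable
      then show ?thesis unfolding Y_def by simp
    qed
    define B where "B = exp (lam\<^sup>2 * (c / real n - - c / real n)\<^sup>2 / 8)"
    have factor: "(\<integral>\<^sup>+\<omega>. ennreal (exp (lam * Y i \<omega>)) \<partial>M) \<le> ennreal B" if i: "i < n" for i
    proof -
      define f where "f \<omega> = G (oi i \<omega>) / real n" for \<omega>
      have fm: "f \<in> borel_measurable M" unfolding f_def using mi[OF i] by measurable
      have fab: "AE \<omega> in M. f \<omega> \<in> {- c / real n .. c / real n}"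
        using AEi[OF i] proof (rule eventually_mono)
        fix \<omega> assume "oi i \<omega> \<in> Gd"
        then have "\<bar>G (oi i \<omega>)\<bar> \<le> c" by (rule Gb)
        then have g1: "- c \<le> G (oi i \<omega>)" and g2: "G (oi i \<omega>) \<le> c" by auto
        have "- c / real n \<le> G (oi i \<omega>) / real n" by (rule divide_right_mono[OF g1]) (use n0 in simp)
        moreover have "G (oi i \<omega>) / real n \<le> c / real n" by (rule divide_right_mono[OF g2]) (use n0 in simp)
        ultimately have "- c / real n \<le> G (oi i \<omega>) / real n" "G (oi i \<omega>) / real n \<le> c / real n" by auto
        then show "f \<omega> \<in> {- c / real n .. c / real n}" by (simp add: f_def)
      qed
      have EG: "P.expectation (\<lambda>\<omega>. G (oi i \<omega>)) = \<mu>"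
        unfolding G_def \<mu>_def
        by (subst Bochner_Integration.integral_diff) (auto simp: intg_i[OF i] Eoi[OF i])
      have Ef: "P.expectation f = \<mu> / real n" unfolding f_def by (simp add: EG)
      have "(\<integral>\<^sup>+\<omega>. ennreal (exp (lam * (f \<omega> - P.expectation f))) \<partial>M) \<le> ennreal B"
        unfolding B_def by (rule hoeff_any[OF assms(1) fm fab])
      moreover have "f \<omega> - P.expectation f = Y i \<omega>" for \<omega>
        unfolding Ef f_def Y_def by (simp add: diff_divide_distrib)
      ultimately show ?thesis by simp
    qed
    have EQ: "P.expectation (\<lambda>\<omega>. exp (lam * (Z \<theta> \<omega> - Z \<eta> \<omega>))) = enn2real (\<integral>\<^sup>+\<omega>. ennreal (\<Prod>i<n. exp (lam * Y i \<omega>)) \<partial>M)"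
    proof -
      have "P.expectation (\<lambda>\<omega>. exp (lam * (Z \<theta> \<omega> - Z \<eta> \<omega>))) = P.expectation (\<lambda>\<omega>. \<Prod>i<n. exp (lam * Y i \<omega>))"
        unfolding prodeq ..
      also have "\<dots> = enn2real (\<integral>\<^sup>+\<omega>. ennreal (\<Prod>i<n. exp (lam * Y i \<omega>)) \<partial>M)"
        by (rule integral_eq_nn_integral) (auto intro!: borel_measurable_prod EY_meas prod_nonneg)
      finally show ?thesis .
    qed
    have "(\<integral>\<^sup>+\<omega>. ennreal (\<Prod>i<n. exp (lam * Y i \<omega>)) \<partial>M) = (\<integral>\<^sup>+\<omega>. (\<Prod>i<n. ennreal (exp (lam * Y i \<omega>))) \<partial>M)"
      by (simp add: prod_ennreal)
    also have "\<dots> = (\<Prod>i<n. \<integral>\<^sup>+\<omega>. ennreal (exp (lam * Y i \<omega>)) \<partial>M)"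
      by (rule P.indep_vars_nn_integral[OF _ indepY]) auto
    also have "\<dots> \<le> (\<Prod>i<n. ennreal B)"
      by (rule prod_mono_ennreal) (use factor in auto)
    also have "\<dots> = ennreal (B ^ n)" by (simp add: prod_ennreal B_def ennreal_power)
    finally have NN: "(\<integral>\<^sup>+\<omega>. ennreal (\<Prod>i<n. exp (lam * Y i \<omega>)) \<partial>M) \<le> ennreal (B ^ n)" .
    have B0: "0 \<le> B ^ n" by (simp add: B_def)
    have step1: "P.expectation (\<lambda>\<omega>. exp (lam * (Z \<theta> \<omega> - Z \<eta> \<omega>))) \<le> B ^ n"
      unfolding EQ by (rule enn2real_leI[OF B0 NN])
    have Bn: "B ^ n = exp (real n * (lam\<^sup>2 * (c / real n - - c / real n)\<^sup>2 / 8))"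
      unfolding B_def by (rule exp_of_nat_mult[symmetric])
    have Deq: "D \<theta> \<eta> = 2 * K / sqrt (real n) * e" by (simp add: D_def K_def E0_def e_def add.commute)
    have D2: "(D \<theta> \<eta>)\<^sup>2 = 4 * (K * e)\<^sup>2 / real n"
      unfolding Deq using n0 by (simp add: power_mult_distrib power_divide)
    define X where "X = lam\<^sup>2 * (K * e)\<^sup>2 / real n"
    have X0: "0 \<le> X" unfolding X_def using n0 by simp
    have l1: "real n * (lam\<^sup>2 * (c / real n - - c / real n)\<^sup>2 / 8) = X / 2"
      unfolding X_def c_def using n0 by (simp add: field_simps power2_eq_square)
    have l2: "lam\<^sup>2 * (D \<theta> \<eta>)\<^sup>2 / 2 = 2 * X"
      unfolding D2 X_def by (simp add: field_simps)
    have "B ^ n \<le> exp (lam\<^sup>2 * (D \<theta> \<eta>)\<^sup>2 / 2)"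
      unfolding Bn l1 l2 using X0 by simp
    with step1 show ?thesis by linarith
  qed
  show ?thesis using part1 part2 by blast
qed

end
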